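(* Every locally finite quasivariety of Wajsberg hoops is a primitive variety.
   Context: Wajsberg hoops: basic hoops (0-free subreducts of prelinear divisible $\mathsf{FL}_{ew}$-algebras) satisfying $(x\to y)\to y\approx(y\to x)\to x$. A quasivariety is locally finite if its finitely generated members are finite. For a quasivariety $\mathcal Q$, a subquasivariety $\mathcal Q'$ is equational in $\mathcal Q$ if $\mathcal Q'=\mathbf H(\mathcal Q')\cap\mathcal Q$; $\mathcal Q$ is primitive if every subquasivariety of $\mathcal Q$ is equational in $\mathcal Q$ (equivalently, every subquasivariety of $\mathcal Q$ is structural, where $\mathcal Q$ is structural if for every subquasivariety $\mathcal Q'$, $\mathbf H(\mathcal Q')=\mathbf H(\mathcal Q)$ implies $\mathcal Q'=\mathcal Q$). *)

theory Defs
  imports Main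
begin

record 'a halg =
  car :: "'a set"
  mul :: "'a \<Rightarrow> 'a \<Rightarrow> 'a"
  imp :: "'a \<Rightarrow> 'a \<Rightarrow> 'a"
  one :: "'a"

definition is_alg :: "'a halg \<Rightarrow> bool" where
  "is_alg A \<longleftrightarrow> car A \<noteq> {} \<and> one A \<in> car A \<and>
     (\<forall>x\<in>car A. \<forall>y\<in>car A. mul A x y \<in> car A \<and> imp A x y \<in> car A)"

definition hle :: "'a halg \<Rightarrow> 'a \<Rightarrow> 'a \<Rightarrow> bool" where
  "hle A x y \<longleftrightarrow> imp A x y = one A"

definition hoop :: "'a halg \<Rightarrow> bool" where
  "hoop A \<longleftrightarrow> is_alg A \<and>
    (\<forall>x\<in>car A. \<forall>y\<in>car A. \<forall>z\<in>car A.
       mul A (mul A x y) z = mul A x (mul A y z) \<and>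
       mul A x y = mul A y x \<and>
       mul A x (one A) = x \<and>
       imp A x x = one A \<and>
       mul A x (imp A x y) = mul A y (imp A y x) \<and>
       imp A x (imp A y z) = imp A (mul A x y) z)"

definition basic_hoop :: "'a halg \<Rightarrow> bool" where
  "basic_hoop A \<longleftrightarrow> hoop A \<and>
    (\<forall>x\<in>car A. \<forall>y\<in>car A. \<forall>z\<in>car A.
       hle A (imp A (imp A x y) z) (imp A (imp A (imp A y x) z) z))"

definition wajsberg_hoop :: "'a halg \<Rightarrow> bool" where
  "wajsberg_hoop A \<longleftrightarrow> basic_hoop A \<and>
    (\<forall>x\<in>car A. \<forall>y\<in>car A. imp A (imp A x y) y = imp A (imp A y x) x)"

datatype trm = Var nat | One | Mul trm trm | Imp trm trm

primrec eval :: "'a halg \<Rightarrow> (nat \<Rightarrow> 'a) \<Rightarrow> trm \<Rightarrow> 'a" where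
  "eval A v (Var i) = v i"
| "eval A v One = one A"
| "eval A v (Mul s t) = mul A (eval A v s) (eval A v t)"
| "eval A v (Imp s t) = imp A (eval A v s) (eval A v t)"

type_synonym eqn = "trm \<times> trm"
type_synonym qeq = "eqn list \<times> eqn"   \<comment> \<open>premises, conclusion\<close>

definition sat_eqn :: "'a halg \<Rightarrow> (nat \<Rightarrow> 'a) \<Rightarrow> eqn \<Rightarrow> bool" where
  "sat_eqn A v e \<longleftrightarrow> eval A v (fst e) = eval A v (snd e)"

definition sat_qeq :: "'a halg \<Rightarrow> qeq \<Rightarrow> bool" where
  "sat_qeq A q \<longleftrightarrow> (\<forall>v. (\<forall>i. v i \<in> car A) \<longrightarrow>
      (\<forall>e\<in>set (fst q). sat_eqn A v e) \<longrightarrow> sat_eqn A v (snd q))"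

text \<open>Every quasivariety of Wajsberg
  hoops is of this form.\<close>
definition in_QV :: "qeq set \<Rightarrow> 'a halg \<Rightarrow> bool" where
  "in_QV \<Sigma> A \<longleftrightarrow> wajsberg_hoop A \<and> (\<forall>q\<in>\<Sigma>. sat_qeq A q)"

definition hom :: "('a \<Rightarrow> 'b) \<Rightarrow> 'a halg \<Rightarrow> 'b halg \<Rightarrow> bool" where
  "hom h A B \<longleftrightarrow> (\<forall>x\<in>car A. h x \<in> car B) \<and> h (one A) = one B \<and>
     (\<forall>x\<in>car A. \<forall>y\<in>car A. h (mul A x y) = mul B (h x) (h y) \<and>
                            h (imp A x y) = imp B (h x) (h y))"

definition hom_onto :: "('a \<Rightarrow> 'b) \<Rightarrow> 'a halg \<Rightarrow> 'b halg \<Rightarrow> bool" where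
  "hom_onto h A B \<longleftrightarrow> is_alg B \<and> hom h A B \<and> h ` car A = car B"

inductive_set gen :: "'a halg \<Rightarrow> 'a set \<Rightarrow> 'a set" for A G where
  gen_base: "x \<in> G \<Longrightarrow> x \<in> gen A G"
| gen_one: "one A \<in> gen A G"
| gen_mul: "x \<in> gen A G \<Longrightarrow> y \<in> gen A G \<Longrightarrow> mul A x y \<in> gen A G"
| gen_imp: "x \<in> gen A G \<Longrightarrow> y \<in> gen A G \<Longrightarrow> imp A x y \<in> gen A G"

definition fin_gen :: "'a halg \<Rightarrow> bool" where
  "fin_gen A \<longleftrightarrow> (\<exists>G. finite G \<and> G \<subseteq> car A \<and> gen A G = car A)"

text \<open>Finitely generated
  algebras are countable, so it suffices (and is equivalent) to quantify over
  algebras whose universe is a set of naturals.\<close>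
definition locally_finite_QV :: "qeq set \<Rightarrow> bool" where
  "locally_finite_QV \<Sigma> \<longleftrightarrow>
     (\<forall>A :: nat halg. in_QV \<Sigma> A \<and> fin_gen A \<longrightarrow> finite (car A))"

end

theory Submission
  imports Defs "HOL-Library.Countable" "HOL-Library.Countable_Set"
begin


locale hp =
  fixes A :: "'a halg"
  assumes hoopA: "hoop A"
begin
abbreviation M (infixl "\<odot>" 70) where "x \<odot> y \<equiv> mul A x y"
abbreviation I (infixr "\<leadsto>" 60) where "x \<leadsto> y \<equiv> imp A x y"
abbreviation U ("\<one>") where "\<one> \<equiv> one A"
abbreviation C where "C \<equiv> car A"

lemma one_c[simp]: "\<one> \<in> C" and mul_c[simp]: "x \<in> C \<Longrightarrow> y \<in> C \<Longrightarrow> x \<odot> y \<in> C"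
  and imp_c[simp]: "x \<in> C \<Longrightarrow> y \<in> C \<Longrightarrow> x \<leadsto> y \<in> C"
  using hoopA by (auto simp: hoop_def is_alg_def)

lemma assoc: "x \<in> C \<Longrightarrow> y \<in> C \<Longrightarrow> z \<in> C \<Longrightarrow> x \<odot> y \<odot> z = x \<odot> (y \<odot> z)"
  and comm: "x \<in> C \<Longrightarrow> y \<in> C \<Longrightarrow> x \<odot> y = y \<odot> x"
  and unit[simp]: "x \<in> C \<Longrightarrow> x \<odot> \<one> = x"
  and refl[simp]: "x \<in> C \<Longrightarrow> x \<leadsto> x = \<one>"
  and dv: "x \<in> C \<Longrightarrow> y \<in> C \<Longrightarrow> x \<odot> (x \<leadsto> y) = y \<odot> (y \<leadsto> x)"
  and res: "x \<in> C \<Longrightarrow> y \<in> C \<Longrightarrow> z \<in> C \<Longrightarrow> x \<leadsto> (y \<leadsto> z) = (x \<odot> y) \<leadsto> z"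
  using hoopA unfolding hoop_def by blast+

lemma unitl[simp]: "x \<in> C \<Longrightarrow> \<one> \<odot> x = x" using comm[of "\<one>" x] by simp

lemma antisym: assumes "x \<in> C" "y \<in> C" "x \<leadsto> y = \<one>" "y \<leadsto> x = \<one>" shows "x = y"
proof -
  have "x = x \<odot> (x \<leadsto> y)" using assms by simp
  also have "\<dots> = y \<odot> (y \<leadsto> x)" using assms dv by blast
  finally show ?thesis using assms by simp
qed

lemma one_imp[simp]: assumes x: "x \<in> C" shows "\<one> \<leadsto> x = x"
proof -
  let ?a = "\<one> \<leadsto> x"
  have a: "?a \<in> C" using x by simp
  have "?a \<leadsto> ?a = (?a \<odot> \<one>) \<leadsto> x" using res[of ?a "\<one>" x] x by simp
  hence s1: "?a \<leadsto> x = \<one>" using a by simp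
  have s2: "x \<leadsto> ?a = \<one>" using res[of x "\<one>" x] x by simp
  show ?thesis using antisym[OF x a s2 s1] by simp
qed

lemma imp_one[simp]: assumes x: "x \<in> C" shows "x \<leadsto> \<one> = \<one>"
proof -
  let ?b = "x \<leadsto> \<one>"
  have b: "?b \<in> C" using x by simp
  have E1: "?b \<odot> x = x" using dv[of x "\<one>"] x comm[of x ?b] by simp
  have "\<one> = ?b \<leadsto> ?b" using b by simp
  also have "\<dots> = (?b \<odot> x) \<leadsto> \<one>" using res[of ?b x "\<one>"] x by simp
  also have "\<dots> = ?b" using E1 by simp
  finally show ?thesis by (rule sym)
qed

lemma mul_le: "x \<in> C \<Longrightarrow> y \<in> C \<Longrightarrow> (x \<odot> y) \<leadsto> x = \<one>"
  by (metis comm res refl imp_one)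

lemma mp: "x \<in> C \<Longrightarrow> y \<in> C \<Longrightarrow> (x \<odot> (x \<leadsto> y)) \<leadsto> y = \<one>"
  by (metis comm res refl imp_c)

lemma trans: assumes "x \<in> C" "y \<in> C" "z \<in> C" "x \<leadsto> y = \<one>" "y \<leadsto> z = \<one>" shows "x \<leadsto> z = \<one>"
proof -
  have "x = y \<odot> (y \<leadsto> x)" using assms dv[of x y] by simp
  hence 1: "x \<leadsto> z = ((y \<leadsto> x) \<odot> y) \<leadsto> z" using assms comm by simp
  have 2: "(y \<leadsto> x) \<leadsto> (y \<leadsto> z) = ((y \<leadsto> x) \<odot> y) \<leadsto> z" by (rule res) (use assms in simp_all)
  have 3: "(y \<leadsto> x) \<leadsto> (y \<leadsto> z) = \<one>" using assms by simp
  show ?thesis using 1 2 3 by simp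
qed

lemma mul_mono: assumes "x \<in> C" "y \<in> C" "z \<in> C" "x \<leadsto> y = \<one>" shows "(x \<odot> z) \<leadsto> (y \<odot> z) = \<one>"
proof -
  have "y \<leadsto> (z \<leadsto> (y \<odot> z)) = \<one>" using assms res by simp
  hence "x \<leadsto> (z \<leadsto> (y \<odot> z)) = \<one>" using trans[of x y] assms by simp
  thus ?thesis using assms res by simp
qed

lemma mul_mono2: assumes "a \<in> C" "b \<in> C" "x \<in> C" "y \<in> C" "a \<leadsto> x = \<one>" "b \<leadsto> y = \<one>"
  shows "(a \<odot> b) \<leadsto> (x \<odot> y) = \<one>"
proof -
  have 1: "(a \<odot> b) \<leadsto> (x \<odot> b) = \<one>" using mul_mono assms by simp
  have "(b \<odot> x) \<leadsto> (y \<odot> x) = \<one>" using mul_mono assms by simp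
  hence 2: "(x \<odot> b) \<leadsto> (x \<odot> y) = \<one>" using comm assms by simp
  show ?thesis using trans[OF _ _ _ 1 2] assms by simp
qed

lemma imp_mono_r: assumes "e \<in> C" "y \<in> C" "z \<in> C" "y \<leadsto> z = \<one>" shows "(e \<leadsto> y) \<leadsto> (e \<leadsto> z) = \<one>"
proof -
  have "((e \<leadsto> y) \<odot> e) \<leadsto> y = \<one>" using assms res[of "e \<leadsto> y" e y] by simp
  hence "((e \<leadsto> y) \<odot> e) \<leadsto> z = \<one>" using trans assms by (meson imp_c mul_c)
  thus ?thesis using assms res by simp
qed

lemma imp_anti_l: assumes "x \<in> C" "y \<in> C" "z \<in> C" "x \<leadsto> y = \<one>" shows "(y \<leadsto> z) \<leadsto> (x \<leadsto> z) = \<one>"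
proof -
  have 1: "((y \<leadsto> z) \<odot> x) \<leadsto> ((y \<leadsto> z) \<odot> y) = \<one>" using mul_mono[of x y "y \<leadsto> z"] assms comm by simp
  have 2: "((y \<leadsto> z) \<odot> y) \<leadsto> z = \<one>" using assms res[of "y \<leadsto> z" y z] by simp
  have "((y \<leadsto> z) \<odot> x) \<leadsto> z = \<one>" using trans[OF _ _ _ 1 2] assms by simp
  thus ?thesis using assms res by simp
qed

lemma le_imp: "x \<in> C \<Longrightarrow> e \<in> C \<Longrightarrow> x \<leadsto> (e \<leadsto> x) = \<one>"
  using res mul_le by simp

end

locale wh = hp +
  assumes wj: "x \<in> C \<Longrightarrow> y \<in> C \<Longrightarrow> (x \<leadsto> y) \<leadsto> y = (y \<leadsto> x) \<leadsto> x"
begin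

lemma join_least: assumes "a \<in> C" "b \<in> C" "c \<in> C" "a \<leadsto> c = \<one>" "b \<leadsto> c = \<one>"
  shows "((a \<leadsto> b) \<leadsto> b) \<leadsto> c = \<one>"
proof -
  have "(c \<leadsto> b) \<leadsto> (a \<leadsto> b) = \<one>" using imp_anti_l assms by simp
  hence "((a \<leadsto> b) \<leadsto> b) \<leadsto> ((c \<leadsto> b) \<leadsto> b) = \<one>" using imp_anti_l assms by simp
  moreover have "(c \<leadsto> b) \<leadsto> b = c" using wj[of c b] assms by simp
  ultimately show ?thesis by simp
qed

lemma split: assumes "a \<in> C" "b \<in> C" "t \<in> C" "s \<in> C" "(a \<leadsto> b) \<leadsto> b = \<one>"
  "(t \<odot> a) \<leadsto> s = \<one>" "(t \<odot> b) \<leadsto> s = \<one>" shows "t \<leadsto> s = \<one>"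
proof -
  have "a \<leadsto> (t \<leadsto> s) = (t \<odot> a) \<leadsto> s" using assms res[of a t s] comm[of a t] by simp
  moreover have "b \<leadsto> (t \<leadsto> s) = (t \<odot> b) \<leadsto> s" using assms res[of b t s] comm[of b t] by simp
  ultimately have "a \<leadsto> (t \<leadsto> s) = \<one>" "b \<leadsto> (t \<leadsto> s) = \<one>" using assms by simp_all
  hence "((a \<leadsto> b) \<leadsto> b) \<leadsto> (t \<leadsto> s) = \<one>" using join_least[of a b "t \<leadsto> s"] assms by simp
  thus ?thesis using assms by simp
qed

context
  fixes e assumes e: "e \<in> C" and idem: "e \<odot> e = e"
begin

lemma idk: "x \<in> C \<Longrightarrow> ((e \<leadsto> x) \<odot> e) \<leadsto> (e \<odot> x) = \<one>"
proof -
  assume x: "x \<in> C"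
  have "(e \<leadsto> x) \<odot> e = (e \<odot> (e \<leadsto> x)) \<odot> e"
    using e x idem by (metis assoc comm imp_c)
  moreover have "((e \<odot> (e \<leadsto> x)) \<odot> e) \<leadsto> (x \<odot> e) = \<one>" using mul_mono mp e x by simp
  ultimately show ?thesis using comm e x by simp
qed

lemma id_wd: assumes x: "x \<in> C" and y: "y \<in> C" and h: "e \<leadsto> (x \<leadsto> y) = \<one>"
  shows "(e \<leadsto> x) \<leadsto> (e \<leadsto> y) = \<one>"
proof -
  have "(e \<odot> x) \<leadsto> y = \<one>" using h res e x y by simp
  hence "((e \<leadsto> x) \<odot> e) \<leadsto> y = \<one>" using trans[OF _ _ _ idk[OF x]] e x y by simp
  thus ?thesis using res e x y by simp
qed

lemma id_imp: assumes x: "x \<in> C" and y: "y \<in> C" shows "e \<leadsto> (x \<leadsto> y) = (e \<leadsto> x) \<leadsto> (e \<leadsto> y)"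
proof -
  let ?p = "e \<leadsto> (x \<leadsto> y)"
  have p: "?p = x \<leadsto> (e \<leadsto> y)" using res comm e x y by metis
  have pc: "?p \<in> C" using e x y by simp
  have A1: "((e \<leadsto> x) \<leadsto> (e \<leadsto> y)) \<leadsto> ?p = \<one>"
    using p imp_anti_l[of x "e \<leadsto> x" "e \<leadsto> y"] le_imp[OF x e] e x y by simp
  have s1: "(?p \<odot> ((e \<leadsto> x) \<odot> e)) \<leadsto> (?p \<odot> (e \<odot> x)) = \<one>"
    using mul_mono[OF _ _ pc idk[OF x]] comm e x y pc by (metis imp_c mul_c)
  have eq: "?p \<odot> (e \<odot> x) = (x \<odot> ?p) \<odot> e" using comm assoc e x pc by (metis mul_c)
  have s2: "((x \<odot> ?p) \<odot> e) \<leadsto> ((e \<leadsto> y) \<odot> e) = \<one>"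
    using mul_mono[OF _ _ e mp[of x "e \<leadsto> y"]] p e x y by simp
  have s3: "((e \<leadsto> y) \<odot> e) \<leadsto> y = \<one>" using mp[OF e y] comm e y by simp
  have "(?p \<odot> ((e \<leadsto> x) \<odot> e)) \<leadsto> y = \<one>"
    using trans[OF _ _ _ s1[unfolded eq] trans[OF _ _ _ s2 s3]] e x y pc by simp
  hence A2: "?p \<leadsto> ((e \<leadsto> x) \<leadsto> (e \<leadsto> y)) = \<one>" using res assoc e x y pc by simp
  have "(e \<leadsto> x) \<leadsto> (e \<leadsto> y) \<in> C" using e x y by simp
  from antisym[OF pc this A2 A1] show ?thesis .
qed

lemma id_mul: assumes x: "x \<in> C" and y: "y \<in> C" shows "e \<leadsto> (x \<odot> y) = (e \<leadsto> x) \<odot> (e \<leadsto> y)"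
proof -
  let ?t = "e \<leadsto> (x \<odot> y)" and ?u = "e \<leadsto> x" and ?v = "e \<leadsto> y"
  have c: "?t \<in> C" "?u \<in> C" "?v \<in> C" "x \<odot> y \<in> C" using e x y by auto
  have ex: "(?u \<odot> e) \<leadsto> x = \<one>" "(?v \<odot> e) \<leadsto> y = \<one>" using mp e x y comm by simp_all
  have "?u \<odot> ?v \<odot> e = ?u \<odot> ?v \<odot> (e \<odot> e)" using idem by simp
  also have "\<dots> = ?u \<odot> (?v \<odot> (e \<odot> e))" using assoc c e by simp
  also have "?v \<odot> (e \<odot> e) = e \<odot> (?v \<odot> e)" using assoc[of ?v e e] comm[of "?v \<odot> e" e] c e by simp
  also have "?u \<odot> (e \<odot> (?v \<odot> e)) = (?u \<odot> e) \<odot> (?v \<odot> e)" using assoc[of ?u e "?v \<odot> e"] c e by simp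
  finally have "?u \<odot> ?v \<odot> e = (?u \<odot> e) \<odot> (?v \<odot> e)" .
  hence "(?u \<odot> ?v \<odot> e) \<leadsto> (x \<odot> y) = \<one>" using mul_mono2[OF _ _ x y ex] c e by simp
  hence A1: "(?u \<odot> ?v) \<leadsto> ?t = \<one>" using res c e by simp
  have xu: "x \<leadsto> ?u = \<one>" "y \<leadsto> ?v = \<one>" using le_imp e x y by auto
  have tu: "?t \<leadsto> ?u = \<one>" using imp_mono_r[OF e _ x mul_le[OF x y]] c by simp
  have tv: "?t \<leadsto> ?v = \<one>" using imp_mono_r[OF e _ y mul_le[OF y x]] c comm x y by simp
  have A2: "?t \<leadsto> (?u \<odot> ?v) = \<one>"
  proof (rule split[OF e c(1) c(1)])
    show "(e \<leadsto> ?t) \<leadsto> ?t = \<one>" using res[OF e e] idem c e by simp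
    have "(?t \<odot> e) \<leadsto> (x \<odot> y) = \<one>" using mp e c comm by simp
    thus "(?t \<odot> e) \<leadsto> (?u \<odot> ?v) = \<one>" using trans mul_mono2[OF x y c(2,3) xu] c e by (meson mul_c)
    show "(?t \<odot> ?t) \<leadsto> (?u \<odot> ?v) = \<one>" using mul_mono2[OF c(1,1,2,3) tu tv] .
    show "?u \<odot> ?v \<in> C" using c by simp
  qed
  have "?u \<odot> ?v \<in> C" using c by simp
  from antisym[OF c(1) this A2 A1] show ?thesis .
qed
end
end



lemma hoop_hp: "hoop A \<Longrightarrow> hp A" by (unfold_locales)
lemma wj_wh: "wajsberg_hoop A \<Longrightarrow> wh A"
  unfolding wajsberg_hoop_def basic_hoop_def
  by (intro wh.intro hoop_hp wh_axioms.intro) auto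

lemma wj_ax: assumes "wajsberg_hoop A" "x \<in> car A" "y \<in> car A" "z \<in> car A"
  shows "mul A (mul A x y) z = mul A x (mul A y z)"
       "mul A x y = mul A y x"
       "mul A x (one A) = x"
       "imp A x x = one A"
       "mul A x (imp A x y) = mul A y (imp A y x)"
       "imp A x (imp A y z) = imp A (mul A x y) z"
       "imp A (imp A (imp A x y) z) (imp A (imp A (imp A y x) z) z) = one A"
       "imp A (imp A x y) y = imp A (imp A y x) x"
  using assms unfolding wajsberg_hoop_def basic_hoop_def hoop_def hle_def by blast+

lemma wj_alg: "wajsberg_hoop A \<Longrightarrow> is_alg A"
  unfolding wajsberg_hoop_def basic_hoop_def hoop_def by blast

lemma alg_cl: "is_alg A \<Longrightarrow> x \<in> car A \<Longrightarrow> y \<in> car A \<Longrightarrow> mul A x y \<in> car A"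
  "is_alg A \<Longrightarrow> x \<in> car A \<Longrightarrow> y \<in> car A \<Longrightarrow> imp A x y \<in> car A"
  "is_alg A \<Longrightarrow> one A \<in> car A"
  unfolding is_alg_def by auto

lemma himg: assumes W: "wajsberg_hoop A" and H: "hom_onto h A B" shows "wajsberg_hoop B"
proof -
  have aB: "is_alg B" and cB: "car B = h ` car A" using H by (auto simp: hom_onto_def)
  have aA: "is_alg A" using W by (rule wj_alg)
  have hm: "\<And>a b. a \<in> car A \<Longrightarrow> b \<in> car A \<Longrightarrow> mul B (h a) (h b) = h (mul A a b)"
   and hi: "\<And>a b. a \<in> car A \<Longrightarrow> b \<in> car A \<Longrightarrow> imp B (h a) (h b) = h (imp A a b)"
   and ho: "one B = h (one A)"
    using H by (auto simp: hom_onto_def hom_def)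
  note cl = alg_cl[OF aA]
  show ?thesis unfolding wajsberg_hoop_def basic_hoop_def hoop_def hle_def cB
    apply (intro conjI ballI)
    apply (rule aB[unfolded cB])
    subgoal by (clarify, simp only: hm hi ho cl, rule arg_cong[where f=h], (rule wj_ax[OF W]; simp add: cl))
    subgoal by (clarify, simp only: hm hi ho cl, rule arg_cong[where f=h], (rule wj_ax[OF W]; simp add: cl))
    subgoal by (clarify, simp only: hm hi ho cl, rule arg_cong[where f=h], (rule wj_ax[OF W]; simp add: cl))
    subgoal by (clarify, simp only: hm hi ho cl, rule arg_cong[where f=h], (rule wj_ax[OF W]; simp add: cl))
    subgoal by (clarify, simp only: hm hi ho cl, rule arg_cong[where f=h], (rule wj_ax[OF W]; simp add: cl))
    subgoal by (clarify, simp only: hm hi ho cl, rule arg_cong[where f=h], (rule wj_ax[OF W]; simp add: cl))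
    subgoal by (clarify, simp only: hm hi ho cl, rule arg_cong[where f=h], (rule wj_ax[OF W]; simp add: cl))
    subgoal by (clarify, simp only: hm hi ho cl, rule arg_cong[where f=h], (rule wj_ax[OF W]; simp add: cl))
    done
qed

lemma eval_hom: assumes "hom g B A" "is_alg B" "\<forall>i. v i \<in> car B"
  shows "eval B v t \<in> car B \<and> g (eval B v t) = eval A (g \<circ> v) t"
  using assms by (induction t) (auto simp: hom_def is_alg_def)

lemma emb: assumes aB: "is_alg B" and inj: "inj_on g (car B)" and hg: "hom g B A"
  and Q: "in_QV S A" shows "in_QV S B"
proof -
  have W: "wajsberg_hoop A" using Q by (simp add: in_QV_def)
  have hm: "\<And>a b. a \<in> car B \<Longrightarrow> b \<in> car B \<Longrightarrow> g (mul B a b) = mul A (g a) (g b)"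
   and hi: "\<And>a b. a \<in> car B \<Longrightarrow> b \<in> car B \<Longrightarrow> g (imp B a b) = imp A (g a) (g b)"
   and ho: "g (one B) = one A" and gc: "\<And>a. a \<in> car B \<Longrightarrow> g a \<in> car A"
    using hg by (auto simp: hom_def)
  note cl = alg_cl[OF aB]
  have eq: "\<And>a b. a \<in> car B \<Longrightarrow> b \<in> car B \<Longrightarrow> g a = g b \<Longrightarrow> a = b"
    using inj by (auto dest: inj_onD)
  have WB: "wajsberg_hoop B" unfolding wajsberg_hoop_def basic_hoop_def hoop_def hle_def
    apply (intro conjI ballI)
    apply (rule aB)
    subgoal by (rule eq, simp_all only: hm hi ho cl gc, (rule wj_ax[OF W]; (simp add: cl gc | (rule gc, assumption))))
    subgoal by (rule eq, simp_all only: hm hi ho cl gc, (rule wj_ax[OF W]; (simp add: cl gc | (rule gc, assumption))))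
    subgoal by (rule eq, simp_all only: hm hi ho cl gc, (rule wj_ax[OF W]; (simp add: cl gc | (rule gc, assumption))))
    subgoal by (rule eq, simp_all only: hm hi ho cl gc, (rule wj_ax[OF W]; (simp add: cl gc | (rule gc, assumption))))
    subgoal by (rule eq, simp_all only: hm hi ho cl gc, (rule wj_ax[OF W]; (simp add: cl gc | (rule gc, assumption))))
    subgoal by (rule eq, simp_all only: hm hi ho cl gc, (rule wj_ax[OF W]; (simp add: cl gc | (rule gc, assumption))))
    subgoal by (rule eq, simp_all only: hm hi ho cl gc, (rule wj_ax[OF W]; (simp add: cl gc | (rule gc, assumption))))
    subgoal by (rule eq, simp_all only: hm hi ho cl gc, (rule wj_ax[OF W]; (simp add: cl gc | (rule gc, assumption))))
    done
  have "sat_qeq B q" if q: "q \<in> S" for q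
  proof -
    have sA: "sat_qeq A q" using Q q by (simp add: in_QV_def)
    show ?thesis unfolding sat_qeq_def sat_eqn_def
    proof (intro allI impI)
      fix v assume v: "\<forall>i. v i \<in> car B" and pr: "\<forall>e\<in>set (fst q). eval B v (fst e) = eval B v (snd e)"
      have ev: "\<And>t. eval B v t \<in> car B \<and> g (eval B v t) = eval A (g \<circ> v) t"
        using eval_hom[OF hg aB v] by blast
      have vA: "\<forall>i. (g \<circ> v) i \<in> car A" using v gc by simp
      have "\<forall>e\<in>set (fst q). eval A (g \<circ> v) (fst e) = eval A (g \<circ> v) (snd e)"
        using pr ev by metis
      hence "eval A (g \<circ> v) (fst (snd q)) = eval A (g \<circ> v) (snd (snd q))"
        using sA vA unfolding sat_qeq_def sat_eqn_def by blast
      thus "eval B v (fst (snd q)) = eval B v (snd (snd q))" using ev eq by metis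
    qed
  qed
  thus ?thesis using WB by (simp add: in_QV_def)
qed



lemma core: assumes W: "wajsberg_hoop A" and fin: "finite (car A)" and H: "hom_onto h A B"
  shows "\<exists>g. inj_on g (car B) \<and> hom g B A"
proof -
  interpret wh A by (rule wj_wh[OF W])
  have WB: "wajsberg_hoop B" by (rule himg[OF W H])
  interpret B: wh B by (rule wj_wh[OF WB])
  have cB: "car B = h ` car A" using H by (auto simp: hom_onto_def)
  have hm: "\<And>a b. a \<in> car A \<Longrightarrow> b \<in> car A \<Longrightarrow> h (mul A a b) = mul B (h a) (h b)"
   and hi: "\<And>a b. a \<in> car A \<Longrightarrow> b \<in> car A \<Longrightarrow> h (imp A a b) = imp B (h a) (h b)"
   and ho: "h (one A) = one B" and hc: "\<And>a. a \<in> car A \<Longrightarrow> h a \<in> car B"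
    using H by (auto simp: hom_onto_def hom_def)
  define F where "F = {x \<in> car A. h x = one B}"
  have FA: "F \<subseteq> car A" by (auto simp: F_def)
  have mF: "\<And>x y. x \<in> F \<Longrightarrow> y \<in> F \<Longrightarrow> mul A x y \<in> F" by (auto simp: F_def hm)
  have ex: "\<And>X. finite X \<Longrightarrow> X \<noteq> {} \<Longrightarrow> X \<subseteq> F \<Longrightarrow> \<exists>e\<in>F. \<forall>x\<in>X. imp A e x = one A"
  proof -
    fix X :: "'a set" assume "finite X" "X \<noteq> {}" "X \<subseteq> F"
    thus "\<exists>e\<in>F. \<forall>x\<in>X. imp A e x = one A"
    proof (induction X rule: finite_ne_induct)
      case (singleton x)
      hence "x \<in> F" "x \<in> car A" using FA by auto
      thus ?case by (intro bexI[of _ x]) auto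
    next
      case (insert x X)
      then obtain e' where e': "e' \<in> F" "\<forall>y\<in>X. imp A e' y = one A" by auto
      have x: "x \<in> F" using insert by auto
      have cx: "x \<in> car A" "e' \<in> car A" using x e' FA by auto
      have "\<forall>y\<in>insert x X. imp A (mul A x e') y = one A"
      proof
        fix y assume y: "y \<in> insert x X"
        show "imp A (mul A x e') y = one A"
        proof (cases "y = x")
          case True thus ?thesis using mul_le cx by simp
        next
          case False
          hence "y \<in> X" using y by simp
          hence "imp A e' y = one A" "y \<in> car A" using e' insert FA by auto
          moreover have "imp A (mul A x e') e' = one A" using mul_le[of e' x] comm cx by simp
          ultimately show ?thesis using trans[of "mul A x e'" e' y] cx by simp
        qed
      qed
      thus ?case using mF[OF x e'(1)] by blast
    qed
  qed
  have "one A \<in> F" using ho by (simp add: F_def)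
  hence "F \<noteq> {}" by auto
  moreover have "finite F" using fin FA finite_subset by auto
  ultimately obtain e where eF: "e \<in> F" and emin: "\<forall>x\<in>F. imp A e x = one A" using ex by blast
  have ec: "e \<in> car A" using eF FA by auto
  have he: "h e = one B" using eF by (simp add: F_def)
  have idem: "mul A e e = e"
    using antisym[of "mul A e e" e] mul_le[OF ec ec] emin mF[OF eF eF] ec by simp
  have key: "\<And>x y. x \<in> car A \<Longrightarrow> y \<in> car A \<Longrightarrow> h x = h y \<Longrightarrow> imp A e x = imp A e y"
  proof -
    fix x y assume x: "x \<in> car A" and y: "y \<in> car A" and hxy: "h x = h y"
    have "imp A x y \<in> F" "imp A y x \<in> F" using x y hxy hi hc by (auto simp: F_def)
    hence "imp A e (imp A x y) = one A" "imp A e (imp A y x) = one A" using emin by auto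
    hence "imp A (imp A e x) (imp A e y) = one A" "imp A (imp A e y) (imp A e x) = one A"
      using id_wd[OF ec idem] x y by auto
    thus "imp A e x = imp A e y" using antisym ec x y by simp
  qed
  define g where "g b = imp A e (SOME x. x \<in> car A \<and> h x = b)" for b
  have gh: "\<And>x. x \<in> car A \<Longrightarrow> g (h x) = imp A e x"
  proof -
    fix x assume x: "x \<in> car A"
    hence "\<exists>x'. x' \<in> car A \<and> h x' = h x" by blast
    hence "(SOME x'. x' \<in> car A \<and> h x' = h x) \<in> car A \<and> h (SOME x'. x' \<in> car A \<and> h x' = h x) = h x"
      by (rule someI_ex)
    thus "g (h x) = imp A e x" unfolding g_def using x by (intro key) auto
  qed
  have "hom g B A" unfolding hom_def cB
  proof (intro conjI ballI)
    show "\<And>b. b \<in> h ` car A \<Longrightarrow> g b \<in> car A" using gh ec by auto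
    show "g (one B) = one A" using gh[of "one A"] ho ec by simp
    fix b1 b2 assume "b1 \<in> h ` car A" "b2 \<in> h ` car A"
    then obtain x y where x: "x \<in> car A" "b1 = h x" and y: "y \<in> car A" "b2 = h y" by auto
    have "g (mul B b1 b2) = g (h (mul A x y))" using x y hm by simp
    also have "\<dots> = imp A e (mul A x y)" using gh x y by simp
    also have "\<dots> = mul A (g b1) (g b2)" using id_mul[OF ec idem] x y gh by simp
    finally show "g (mul B b1 b2) = mul A (g b1) (g b2)" .
    have "g (imp B b1 b2) = g (h (imp A x y))" using x y hi by simp
    also have "\<dots> = imp A e (imp A x y)" using gh x y by simp
    also have "\<dots> = imp A (g b1) (g b2)" using id_imp[OF ec idem] x y gh by simp
    finally show "g (imp B b1 b2) = imp A (g b1) (g b2)" .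
  qed
  moreover have "inj_on g (car B)" unfolding cB
  proof (rule inj_onI)
    fix b1 b2 assume "b1 \<in> h ` car A" "b2 \<in> h ` car A" and eq: "g b1 = g b2"
    then obtain x y where x: "x \<in> car A" "b1 = h x" and y: "y \<in> car A" "b2 = h y" by auto
    have "imp A e x = imp A e y" using eq x y gh by simp
    hence "h (imp A e x) = h (imp A e y)" by simp
    thus "b1 = b2" using hi ec x y he hc by simp
  qed
  ultimately show ?thesis by blast
qed



instance trm :: countable by countable_datatype

lemma gen_sub: "G \<subseteq> car A \<Longrightarrow> is_alg A \<Longrightarrow> gen A G \<subseteq> car A"
proof
  fix x assume G: "G \<subseteq> car A" and aA: "is_alg A" and x: "x \<in> gen A G"
  from x show "x \<in> car A" by (induction rule: gen.induct) (use G aA in \<open>auto simp: is_alg_def\<close>)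
qed

lemma gen_upd: "gen (A\<lparr>car := X\<rparr>) G = gen A G"
proof
  show "gen (A\<lparr>car := X\<rparr>) G \<subseteq> gen A G"
  proof
    fix x assume "x \<in> gen (A\<lparr>car := X\<rparr>) G" thus "x \<in> gen A G"
      by (induction rule: gen.induct) (auto intro: gen.intros)
  qed
  show "gen A G \<subseteq> gen (A\<lparr>car := X\<rparr>) G"
  proof
    fix x assume "x \<in> gen A G" thus "x \<in> gen (A\<lparr>car := X\<rparr>) G"
      by (induction rule: gen.induct) (auto intro: gen.intros gen.gen_one[of "A\<lparr>car := X\<rparr>", simplified]
        gen.gen_mul[of _ "A\<lparr>car := X\<rparr>", simplified] gen.gen_imp[of _ "A\<lparr>car := X\<rparr>", simplified])
  qed
qed

lemma lf_transfer: assumes lf: "locally_finite_QV \<Sigma>" and Q: "in_QV \<Sigma> A" and fg: "fin_gen A"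
  shows "finite (car A)"
proof -
  obtain G where G: "finite G" "G \<subseteq> car A" "gen A G = car A" using fg by (auto simp: fin_gen_def)
  have aA: "is_alg A" using Q by (simp add: in_QV_def wj_alg)
  define w where "w i = (if G = {} then one A else from_nat_into G i)" for i
  have wG: "\<And>x. x \<in> G \<Longrightarrow> \<exists>i. w i = x"
    using from_nat_into_surj[OF countable_finite[OF G(1)]] by (auto simp: w_def)
  have "gen A G \<subseteq> range (eval A w)"
  proof
    fix x assume "x \<in> gen A G" thus "x \<in> range (eval A w)"
    proof (induction rule: gen.induct)
      case (gen_base x) then obtain i where "w i = x" using wG by blast
      thus ?case by (metis eval.simps(1) rangeI)
    next
      case gen_one thus ?case by (metis eval.simps(2) rangeI)
    next
      case (gen_mul x y) then obtain s t where "x = eval A w s" "y = eval A w t" by auto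
      thus ?case by (metis eval.simps(3) rangeI)
    next
      case (gen_imp x y) then obtain s t where "x = eval A w s" "y = eval A w t" by auto
      thus ?case by (metis eval.simps(4) rangeI)
    qed
  qed
  moreover have "countable (range (eval A w))" by (rule countable_image[OF countableI_type])
  ultimately have cnt: "countable (car A)" using G(3) countable_subset by metis
  define f where "f = to_nat_on (car A)"
  define fi where "fi = from_nat_into (car A)"
  have fif: "\<And>x. x \<in> car A \<Longrightarrow> fi (f x) = x" using cnt by (simp add: f_def fi_def)
  have injf: "inj_on f (car A)" using cnt by (simp add: f_def inj_on_to_nat_on)
  define A1 :: "nat halg" where "A1 = \<lparr>car = f ` car A, mul = \<lambda>x y. f (mul A (fi x) (fi y)),
      imp = \<lambda>x y. f (imp A (fi x) (fi y)), one = f (one A)\<rparr>"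
  have cl: "\<And>x y. x \<in> car A \<Longrightarrow> y \<in> car A \<Longrightarrow> mul A x y \<in> car A"
    "\<And>x y. x \<in> car A \<Longrightarrow> y \<in> car A \<Longrightarrow> imp A x y \<in> car A" "one A \<in> car A"
    using aA by (auto simp: is_alg_def)
  have aA1: "is_alg A1" using cl by (auto simp: is_alg_def A1_def fif)
  have hom1: "hom fi A1 A" using cl by (auto simp: hom_def A1_def fif)
  have inj1: "inj_on fi (car A1)" by (auto simp: A1_def fif intro!: inj_onI)
  have Q1: "in_QV \<Sigma> A1" by (rule emb[OF aA1 inj1 hom1 Q])
  have mf: "\<And>x y. x \<in> car A \<Longrightarrow> y \<in> car A \<Longrightarrow> f (mul A x y) = mul A1 (f x) (f y)"
    "\<And>x y. x \<in> car A \<Longrightarrow> y \<in> car A \<Longrightarrow> f (imp A x y) = imp A1 (f x) (f y)"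
    "f (one A) = one A1" by (auto simp: A1_def fif)
  have "\<And>x. x \<in> gen A G \<Longrightarrow> f x \<in> gen A1 (f ` G)"
  proof -
    fix x assume "x \<in> gen A G"
    thus "f x \<in> gen A1 (f ` G)"
    proof (induction rule: gen.induct)
      case (gen_base x) thus ?case by (auto intro: gen.gen_base)
    next
      case gen_one thus ?case using mf(3) gen.gen_one by metis
    next
      case (gen_mul x y)
      have "x \<in> car A" "y \<in> car A" using gen_mul G(3) by auto
      thus ?case using mf(1) gen.gen_mul gen_mul.IH by metis
    next
      case (gen_imp x y)
      have "x \<in> car A" "y \<in> car A" using gen_imp G(3) by auto
      thus ?case using mf(2) gen.gen_imp gen_imp.IH by metis
    qed
  qed
  hence "car A1 \<subseteq> gen A1 (f ` G)" using G(3) by (auto simp: A1_def)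
  moreover have "gen A1 (f ` G) \<subseteq> car A1" by (rule gen_sub[OF _ aA1]) (use G(2) in \<open>auto simp: A1_def\<close>)
  ultimately have "fin_gen A1" unfolding fin_gen_def using G(1,2)
    by (intro exI[of _ "f ` G"]) (auto simp: A1_def)
  hence "finite (car A1)" using lf Q1 by (auto simp: locally_finite_QV_def)
  thus ?thesis using injf by (simp add: A1_def finite_image_iff)
qed

primrec vars :: "trm \<Rightarrow> nat set" where
  "vars (Var i) = {i}" | "vars One = {}" | "vars (Mul s t) = vars s \<union> vars t" | "vars (Imp s t) = vars s \<union> vars t"

lemma finite_vars: "finite (vars t)" by (induction t) auto

lemma eval_cong: "\<forall>i\<in>vars t. v i = v' i \<Longrightarrow> eval A v t = eval A v' t" by (induction t) auto

lemma eval_upd: "eval (A\<lparr>car := X\<rparr>) v t = eval A v t" by (induction t) auto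

lemma QV_mono: "S \<subseteq> S' \<Longrightarrow> in_QV S' A \<Longrightarrow> in_QV S A" by (auto simp: in_QV_def)

lemma main: assumes lf: "locally_finite_QV \<Sigma>" and sub: "\<Sigma> \<subseteq> \<Sigma>'" and QA: "in_QV \<Sigma>' A"
  and H: "hom_onto h A B" shows "in_QV \<Sigma>' B"
proof -
  have W: "wajsberg_hoop A" using QA by (simp add: in_QV_def)
  have WB: "wajsberg_hoop B" by (rule himg[OF W H])
  have aA: "is_alg A" using W by (rule wj_alg)
  have cB: "car B = h ` car A" using H by (auto simp: hom_onto_def)
  have hm: "\<And>a b. a \<in> car A \<Longrightarrow> b \<in> car A \<Longrightarrow> h (mul A a b) = mul B (h a) (h b)"
   and hi: "\<And>a b. a \<in> car A \<Longrightarrow> b \<in> car A \<Longrightarrow> h (imp A a b) = imp B (h a) (h b)"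
   and ho: "h (one A) = one B"
    using H by (auto simp: hom_onto_def hom_def)
  have "sat_qeq B q" if q: "q \<in> \<Sigma>'" for q
    unfolding sat_qeq_def
  proof (intro allI impI)
    fix v assume v: "\<forall>i. v i \<in> car B" and pr: "\<forall>e\<in>set (fst q). sat_eqn B v e"
    define Vq where "Vq = (\<Union>e\<in>set (fst q) \<union> {snd q}. vars (fst e) \<union> vars (snd e))"
    have fV: "finite Vq" by (auto simp: Vq_def finite_vars)
    define a where "a i = (SOME x. x \<in> car A \<and> h x = v i)" for i
    have a: "\<And>i. a i \<in> car A \<and> h (a i) = v i"
    proof -
      fix i have "v i \<in> h ` car A" using v cB by simp
      hence "\<exists>x. x \<in> car A \<and> h x = v i" by auto
      thus "a i \<in> car A \<and> h (a i) = v i" unfolding a_def by (rule someI_ex)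
    qed
    define G where "G = a ` Vq"
    have GA: "G \<subseteq> car A" using a by (auto simp: G_def)
    define A0 where "A0 = A\<lparr>car := gen A G\<rparr>"
    have g0: "gen A0 G = gen A G" by (simp add: A0_def gen_upd)
    have gA: "gen A G \<subseteq> car A" by (rule gen_sub[OF GA aA])
    have aA0: "is_alg A0" by (auto simp: A0_def is_alg_def intro: gen.intros)
    have Q0: "in_QV \<Sigma>' A0"
      by (rule emb[OF aA0 _ _ QA, of id]) (use gA in \<open>auto simp: hom_def A0_def\<close>)
    have fg0: "fin_gen A0" unfolding fin_gen_def using fV g0
      by (intro exI[of _ G]) (auto simp: G_def A0_def intro: gen.gen_base)
    have fin0: "finite (car A0)" by (rule lf_transfer[OF lf QV_mono[OF sub Q0] fg0])
    define B0 where "B0 = B\<lparr>car := h ` gen A G\<rparr>"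
    have hm': "\<And>x y. x \<in> gen A G \<Longrightarrow> y \<in> gen A G \<Longrightarrow> mul B (h x) (h y) = h (mul A x y)"
      using gA hm by (metis subsetD)
    have hi': "\<And>x y. x \<in> gen A G \<Longrightarrow> y \<in> gen A G \<Longrightarrow> imp B (h x) (h y) = h (imp A x y)"
      using gA hi by (metis subsetD)
    have H0: "hom_onto h A0 B0" unfolding hom_onto_def hom_def is_alg_def
      by (auto simp: A0_def B0_def hm' hi' ho[symmetric] intro: gen.intros)
    obtain g where g: "inj_on g (car B0)" "hom g B0 A0"
      using core[OF _ fin0 H0] Q0 by (auto simp: in_QV_def)
    have Q0B: "in_QV \<Sigma>' B0" by (rule emb[OF _ g Q0]) (use H0 in \<open>simp add: hom_onto_def\<close>)
    define v' where "v' i = (if i \<in> Vq then v i else one B)" for i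
    have v': "\<forall>i. v' i \<in> car B0"
    proof
      fix i show "v' i \<in> car B0"
      proof (cases "i \<in> Vq")
        case True
        hence "a i \<in> gen A G" by (auto simp: G_def intro: gen.gen_base)
        hence "h (a i) \<in> h ` gen A G" by blast
        thus ?thesis using True a[of i] by (simp add: v'_def B0_def)
      next
        case False
        have "h (one A) \<in> h ` gen A G" using gen.gen_one[of A G] by blast
        thus ?thesis using False ho by (simp add: v'_def B0_def)
      qed
    qed
    have ev: "\<And>t. vars t \<subseteq> Vq \<Longrightarrow> eval B0 v' t = eval B v t"
      by (simp add: B0_def eval_upd) (rule eval_cong, auto simp: v'_def)
    have s0: "sat_qeq B0 q" using Q0B q by (simp add: in_QV_def)
    have "\<forall>e\<in>set (fst q). sat_eqn B0 v' e"
    proof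
      fix e assume e: "e \<in> set (fst q)"
      hence "vars (fst e) \<subseteq> Vq" "vars (snd e) \<subseteq> Vq" by (auto simp: Vq_def)
      thus "sat_eqn B0 v' e" using pr e ev by (auto simp: sat_eqn_def)
    qed
    hence "sat_eqn B0 v' (snd q)" using s0 v' by (auto simp: sat_qeq_def)
    moreover have "vars (fst (snd q)) \<subseteq> Vq" "vars (snd (snd q)) \<subseteq> Vq" by (auto simp: Vq_def)
    ultimately show "sat_eqn B v (snd q)" using ev by (simp add: sat_eqn_def)
  qed
  thus ?thesis using WB by (simp add: in_QV_def)
qed

theorem theorem4p4:
  fixes \<Sigma> :: "qeq set"
  assumes "locally_finite_QV \<Sigma>"
  shows "(\<forall>(A :: 'a halg) (B :: 'b halg) h.
            in_QV \<Sigma> A \<and> hom_onto h A B \<longrightarrow> in_QV \<Sigma> B)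
       \<and> (\<forall>\<Sigma>'. \<Sigma> \<subseteq> \<Sigma>' \<longrightarrow>
            (\<forall>(A :: 'a halg) (B :: 'b halg) h.
               in_QV \<Sigma>' A \<and> hom_onto h A B \<and> in_QV \<Sigma> B \<longrightarrow> in_QV \<Sigma>' B))"
  using main[OF assms] by blast

end
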